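(* In the setting below, $\|\mathcal{T}_A\varphi\|_{A_0}\le9\|\varphi\|_{A_0}$ for all $\varphi\in X_N$.
   Context: Standing: $d\ge2$, $m\ge1$, $L\ge3$ odd, $N\ge1$. $\mathbb{T}_N=(\mathbb{Z}/L^N\mathbb{Z})^d$; $X_N$: maps $\mathbb{T}_N\to\mathbb{C}^m$ with zero sum; $\langle\varphi,\psi\rangle=\sum_x\langle\varphi(x),\overline{\psi(x)}\rangle$. $(\nabla_j\varphi)(x)=\varphi(x+e_j)-\varphi(x)$. $A:\mathbb{C}^{m\times d}\to\mathbb{C}^{m\times d}$ linear with $A=A_0+A_1$, $A_0$ Hermitian with $\langle A_0F,F\rangle\ge c_0|F|^2$ ($c_0>0$), $\|A_1\|\le c_0/2$. $(\varphi,\psi)_A=\langle A\nabla\varphi,\nabla\psi\rangle$, $\|\varphi\|_{A_0}=(\varphi,\varphi)_{A_0}^{1/2}$. Let $l\ge3$ be an integer with $l-1<L^N$, $Q=\{1,\dots,l-1\}^d$, $H(Q+x)=\{\varphi\in X_N:\varphi=0\text{ outside }Q+x\}$; $\Pi_{A,x}\varphi$ is the unique $v\in H(Q+x)$ with $(v,\psi)_A=(\varphi,\psi)_A$ for all $\psi\in H(Q+x)$. $\mathcal{T}_A=l^{-d}\sum_{x\in\mathbb{T}_N}\Pi_{A,x}$. *)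

theory Defs
  imports Complex_Main
begin

text \<open>Points of the torus (Z/nZ)^d are represented as functions nat => nat with
  components in {0..<n} for indices below d and 0 otherwise.\<close>

definition torus :: "nat \<Rightarrow> nat \<Rightarrow> (nat \<Rightarrow> nat) set" where
  "torus n d = {x. (\<forall>i<d. x i < n) \<and> (\<forall>i. d \<le> i \<longrightarrow> x i = 0)}"

definition tadd :: "nat \<Rightarrow> nat \<Rightarrow> (nat \<Rightarrow> nat) \<Rightarrow> (nat \<Rightarrow> nat) \<Rightarrow> (nat \<Rightarrow> nat)" where
  "tadd n d x y = (\<lambda>i. if i < d then (x i + y i) mod n else 0)"

definition unitv :: "nat \<Rightarrow> (nat \<Rightarrow> nat)" where
  "unitv j = (\<lambda>i. if i = j then 1 else 0)"

text \<open>Fields T_N -> C^m: value at x, component k (k < m); zero outside.\<close>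
type_synonym cfield = "(nat \<Rightarrow> nat) \<Rightarrow> nat \<Rightarrow> complex"

definition XN :: "nat \<Rightarrow> nat \<Rightarrow> nat \<Rightarrow> cfield set" where
  "XN n d m = {\<phi>. (\<forall>x k. x \<notin> torus n d \<longrightarrow> \<phi> x k = 0)
                 \<and> (\<forall>x k. m \<le> k \<longrightarrow> \<phi> x k = 0)
                 \<and> (\<forall>k<m. (\<Sum>x\<in>torus n d. \<phi> x k) = 0)}"

definition grad :: "nat \<Rightarrow> nat \<Rightarrow> cfield \<Rightarrow> (nat \<Rightarrow> nat) \<Rightarrow> nat \<Rightarrow> nat \<Rightarrow> complex" where
  "grad n d \<phi> x k j = \<phi> (tadd n d x (unitv j)) k - \<phi> x k"

text \<open>Linear maps on C^(m x d), given by their coefficients.\<close>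
type_synonym coeff = "nat \<Rightarrow> nat \<Rightarrow> nat \<Rightarrow> nat \<Rightarrow> complex"

definition applyA :: "nat \<Rightarrow> nat \<Rightarrow> coeff \<Rightarrow> (nat \<Rightarrow> nat \<Rightarrow> complex) \<Rightarrow> (nat \<Rightarrow> nat \<Rightarrow> complex)" where
  "applyA m d A F = (\<lambda>i j. \<Sum>k<m. \<Sum>r<d. A i j k r * F k r)"

definition minner :: "nat \<Rightarrow> nat \<Rightarrow> (nat \<Rightarrow> nat \<Rightarrow> complex) \<Rightarrow> (nat \<Rightarrow> nat \<Rightarrow> complex) \<Rightarrow> complex" where
  "minner m d F G = (\<Sum>i<m. \<Sum>j<d. F i j * cnj (G i j))"

definition mnorm :: "nat \<Rightarrow> nat \<Rightarrow> (nat \<Rightarrow> nat \<Rightarrow> complex) \<Rightarrow> real" where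
  "mnorm m d F = sqrt (\<Sum>i<m. \<Sum>j<d. (cmod (F i j))^2)"

definition formA :: "nat \<Rightarrow> nat \<Rightarrow> nat \<Rightarrow> coeff \<Rightarrow> cfield \<Rightarrow> cfield \<Rightarrow> complex" where
  "formA n d m A \<phi> \<psi> = (\<Sum>x\<in>torus n d. minner m d (applyA m d A (grad n d \<phi> x)) (grad n d \<psi> x))"

definition normA0 :: "nat \<Rightarrow> nat \<Rightarrow> nat \<Rightarrow> coeff \<Rightarrow> cfield \<Rightarrow> real" where
  "normA0 n d m A0 \<phi> = sqrt (Re (formA n d m A0 \<phi> \<phi>))"

definition cube :: "nat \<Rightarrow> nat \<Rightarrow> nat \<Rightarrow> (nat \<Rightarrow> nat) \<Rightarrow> (nat \<Rightarrow> nat) set" where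
  "cube n d l x = {tadd n d x q | q. (\<forall>i<d. 1 \<le> q i \<and> q i \<le> l - 1) \<and> (\<forall>i. d \<le> i \<longrightarrow> q i = 0)}"

definition Hcube :: "nat \<Rightarrow> nat \<Rightarrow> nat \<Rightarrow> nat \<Rightarrow> (nat \<Rightarrow> nat) \<Rightarrow> cfield set" where
  "Hcube n d m l x = {\<phi> \<in> XN n d m. \<forall>y k. y \<notin> cube n d l x \<longrightarrow> \<phi> y k = 0}"

definition proj :: "nat \<Rightarrow> nat \<Rightarrow> nat \<Rightarrow> nat \<Rightarrow> coeff \<Rightarrow> (nat \<Rightarrow> nat) \<Rightarrow> cfield \<Rightarrow> cfield" where
  "proj n d m l A x \<phi> = (THE v. v \<in> Hcube n d m l x \<and>
      (\<forall>\<psi>\<in>Hcube n d m l x. formA n d m A v \<psi> = formA n d m A \<phi> \<psi>))"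

definition TA :: "nat \<Rightarrow> nat \<Rightarrow> nat \<Rightarrow> nat \<Rightarrow> coeff \<Rightarrow> cfield \<Rightarrow> cfield" where
  "TA n d m l A \<phi> = (\<lambda>y k. (\<Sum>x\<in>torus n d. proj n d m l A x \<phi> y k) / (of_nat l ^ d))"

end

theory Submission
  imports Defs "Jordan_Normal_Form.Determinant"
begin


definition mn2 :: "nat \<Rightarrow> nat \<Rightarrow> (nat \<Rightarrow> nat \<Rightarrow> complex) \<Rightarrow> real" where
  "mn2 m d F = (\<Sum>i<m. \<Sum>j<d. (cmod (F i j))^2)"

lemma minner_add_left: "minner m d (\<lambda>i j. F i j + G i j) H = minner m d F H + minner m d G H"
  by (simp add: minner_def distrib_right sum.distrib)
lemma minner_add_right: "minner m d H (\<lambda>i j. F i j + G i j) = minner m d H F + minner m d H G"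
  by (simp add: minner_def distrib_left sum.distrib)
lemma minner_diff_left: "minner m d (\<lambda>i j. F i j - G i j) H = minner m d F H - minner m d G H"
  by (simp add: minner_def left_diff_distrib sum_subtractf)
lemma minner_diff_right: "minner m d H (\<lambda>i j. F i j - G i j) = minner m d H F - minner m d H G"
  by (simp add: minner_def right_diff_distrib sum_subtractf)
lemma minner_scale_left: "minner m d (\<lambda>i j. c * F i j) H = c * minner m d F H"
  by (simp add: minner_def sum_distrib_left mult.assoc)
lemma minner_scale_right: "minner m d H (\<lambda>i j. c * F i j) = cnj c * minner m d H F"
  by (simp add: minner_def sum_distrib_left mult_ac)
lemma minner_cnj: "cnj (minner m d F G) = minner m d G F"
  by (simp add: minner_def mult.commute)
lemma applyA_add: "applyA m d A (\<lambda>i j. F i j + G i j) = (\<lambda>i j. applyA m d A F i j + applyA m d A G i j)"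
  by (simp add: applyA_def distrib_left sum.distrib)
lemma applyA_diff: "applyA m d A (\<lambda>i j. F i j - G i j) = (\<lambda>i j. applyA m d A F i j - applyA m d A G i j)"
  by (simp add: applyA_def right_diff_distrib sum_subtractf)
lemma applyA_scale: "applyA m d A (\<lambda>i j. c * F i j) = (\<lambda>i j. c * applyA m d A F i j)"
  by (simp add: applyA_def sum_distrib_left mult_ac)
lemma applyA_Aadd: "applyA m d (\<lambda>i j k r. A0 i j k r + A1 i j k r) F = (\<lambda>i j. applyA m d A0 F i j + applyA m d A1 F i j)"
  by (simp add: applyA_def distrib_right sum.distrib)

lemma mn2_nonneg: "mn2 m d F \<ge> 0"
  by (simp add: mn2_def sum_nonneg)

lemma amgm_e:
  assumes t: "t > 0"
  shows "cmod (minner m d P G) \<le> (t * mn2 m d P + mn2 m d G / t) / 2"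
proof -
  have "cmod (minner m d P G) \<le> (\<Sum>i<m. \<Sum>j<d. cmod (P i j * cnj (G i j)))"
    unfolding minner_def by (rule order_trans[OF norm_sum sum_mono]) (rule norm_sum)
  also have "\<dots> \<le> (\<Sum>i<m. \<Sum>j<d. (t * (cmod (P i j))^2 + (cmod (G i j))^2 / t) / 2)"
  proof (intro sum_mono)
    fix i j
    have "0 \<le> (t * cmod (P i j) - cmod (G i j))^2 / t" using t by simp
    hence "2 * (cmod (P i j) * cmod (G i j)) \<le> t * (cmod (P i j))^2 + (cmod (G i j))^2 / t"
      using t by (simp add: power2_eq_square field_simps)
    thus "cmod (P i j * cnj (G i j)) \<le> (t * (cmod (P i j))^2 + (cmod (G i j))^2 / t) / 2"
      by (simp add: norm_mult)
  qed
  also have "\<dots> = (t * mn2 m d P + mn2 m d G / t) / 2"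
    by (simp add: mn2_def sum_divide_distrib sum.distrib sum_distrib_left add_divide_distrib)
  finally show ?thesis .
qed

lemma mnorm_mn2: "mnorm m d F = sqrt (mn2 m d F)"
  by (simp add: mnorm_def mn2_def)

lemma mn2_zero_iff: "mn2 m d F = 0 \<longleftrightarrow> (\<forall>i<m. \<forall>j<d. F i j = 0)"
  unfolding mn2_def by (auto simp: sum_nonneg_eq_0_iff sum_nonneg)

locale coef =
  fixes m d :: nat and c0 :: real and A A0 A1 :: coeff
  assumes c0: "c0 > 0"
    and A_def: "A = (\<lambda>i j k r. A0 i j k r + A1 i j k r)"
    and herm: "\<forall>F G. minner m d (applyA m d A0 F) G = minner m d F (applyA m d A0 G)"
    and coer: "\<forall>F. Re (minner m d (applyA m d A0 F) F) \<ge> c0 * (mnorm m d F)^2"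
    and A1b: "\<forall>F. mnorm m d (applyA m d A1 F) \<le> (c0 / 2) * mnorm m d F"
begin

definition q0 :: "(nat \<Rightarrow> nat \<Rightarrow> complex) \<Rightarrow> real" where
  "q0 F = Re (minner m d (applyA m d A0 F) F)"

lemma q0_ge: "c0 * mn2 m d F \<le> q0 F"
  using coer[rule_format, of F] by (simp add: q0_def mnorm_mn2 mn2_nonneg)

lemma q0_nonneg: "q0 F \<ge> 0"
  using q0_ge[of F] mn2_nonneg[of m d F] c0 by (smt (verit) mult_nonneg_nonneg)

lemma b_herm: "minner m d (applyA m d A0 G) F = cnj (minner m d (applyA m d A0 F) G)"
  using herm[rule_format, of G F] by (simp add: minner_cnj)

lemma amgm_b:
  assumes t: "t > 0"
  shows "cmod (minner m d (applyA m d A0 F) G) \<le> (t * q0 F + q0 G / t) / 2"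
proof (cases "minner m d (applyA m d A0 F) G = 0")
  case True
  then show ?thesis using q0_nonneg[of F] q0_nonneg[of G] t by simp
next
  case False
  define w where "w = minner m d (applyA m d A0 F) G"
  define lam where "lam = complex_of_real t * cnj w / complex_of_real (cmod w)"
  have w0: "cmod w > 0" using False w_def by simp
  have cw: "cnj w * w = complex_of_real ((cmod w)^2)"
    by (simp add: complex_norm_square mult.commute del: of_real_power)
  have "lam * w = complex_of_real t * (cnj w * w) / complex_of_real (cmod w)"
    unfolding lam_def by (simp add: field_simps)
  also have "\<dots> = complex_of_real (t * cmod w)"
    unfolding cw using w0 by (simp add: field_simps power2_eq_square)
  finally have lw: "lam * w = complex_of_real (t * cmod w)" .
  have "lam * cnj lam = complex_of_real t * complex_of_real t * (cnj w * w) / (complex_of_real (cmod w) * complex_of_real (cmod w))"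
    unfolding lam_def by (simp add: field_simps)
  also have "\<dots> = complex_of_real (t^2)"
    unfolding cw using w0 by (simp add: field_simps power2_eq_square)
  finally have ll: "lam * cnj lam = complex_of_real (t^2)" .
  define H where "H = (\<lambda>i j. lam * F i j - G i j)"
  have "minner m d (applyA m d A0 H) H
      = lam * (cnj lam * minner m d (applyA m d A0 F) F - w) - (cnj lam * minner m d (applyA m d A0 G) F - minner m d (applyA m d A0 G) G)"
    unfolding H_def applyA_diff applyA_scale
    by (simp add: minner_diff_left minner_diff_right minner_scale_left minner_scale_right w_def right_diff_distrib)
  also have "\<dots> = (lam * cnj lam) * minner m d (applyA m d A0 F) F - lam * w - cnj (lam * w) + minner m d (applyA m d A0 G) G"
    by (simp add: b_herm[of G F] w_def algebra_simps)
  finally have eq: "q0 H = t^2 * q0 F - 2 * (t * cmod w) + q0 G"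
    unfolding q0_def ll lw by simp
  have "0 \<le> q0 H" by (rule q0_nonneg)
  hence "2 * t * cmod w \<le> t^2 * q0 F + q0 G" using eq by simp
  hence "cmod w \<le> (t^2 * q0 F + q0 G) / (2 * t)" using t by (simp add: field_simps)
  also have "\<dots> = (t * q0 F + q0 G / t) / 2" using t by (simp add: field_simps power2_eq_square)
  finally show ?thesis unfolding w_def .
qed

lemma A1_mn2: "mn2 m d (applyA m d A1 F) \<le> (c0/2)^2 * mn2 m d F"
proof -
  have "sqrt (mn2 m d (applyA m d A1 F)) \<le> (c0/2) * sqrt (mn2 m d F)"
    using A1b[rule_format, of F] by (simp add: mnorm_mn2)
  also have "\<dots> = sqrt ((c0/2)^2 * mn2 m d F)" using c0 by (simp add: real_sqrt_mult)
  finally show ?thesis by simp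
qed

lemma A1_bound:
  assumes t: "t > 0"
  shows "cmod (minner m d (applyA m d A1 F) G) \<le> (t * (c0/2)^2 * mn2 m d F + mn2 m d G / t) / 2"
proof -
  have "cmod (minner m d (applyA m d A1 F) G) \<le> (t * mn2 m d (applyA m d A1 F) + mn2 m d G / t) / 2"
    by (rule amgm_e[OF t])
  also have "\<dots> \<le> (t * ((c0/2)^2 * mn2 m d F) + mn2 m d G / t) / 2"
    using A1_mn2[of F] t by (intro divide_right_mono add_right_mono mult_left_mono) auto
  finally show ?thesis by simp
qed

lemma applyA_split: "minner m d (applyA m d A F) G = minner m d (applyA m d A0 F) G + minner m d (applyA m d A1 F) G"
  unfolding A_def applyA_Aadd by (simp add: minner_add_left)

lemma bound_A: "cmod (minner m d (applyA m d A F) G) \<le> 9/4 * q0 F + q0 G / 4"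
proof -
  have 1: "cmod (minner m d (applyA m d A0 F) G) \<le> (3 * q0 F + q0 G / 3) / 2"
    by (rule amgm_b) simp
  have 2: "cmod (minner m d (applyA m d A1 F) G) \<le> ((6/c0) * (c0/2)^2 * mn2 m d F + mn2 m d G / (6/c0)) / 2"
    by (rule A1_bound) (use c0 in simp)
  have "((6/c0) * (c0/2)^2 * mn2 m d F + mn2 m d G / (6/c0)) / 2 = 3/4 * (c0 * mn2 m d F) + (c0 * mn2 m d G) / 12"
    using c0 by (simp add: field_simps power2_eq_square)
  also have "\<dots> \<le> 3/4 * q0 F + q0 G / 12"
    using q0_ge[of F] q0_ge[of G] by simp
  finally have 3: "cmod (minner m d (applyA m d A1 F) G) \<le> 3/4 * q0 F + q0 G / 12" using 2 by simp
  show ?thesis unfolding applyA_split using 1 3 norm_triangle_ineq[of "minner m d (applyA m d A0 F) G" "minner m d (applyA m d A1 F) G"]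
    by simp
qed

lemma coercive_A: "q0 G / 2 \<le> Re (minner m d (applyA m d A G) G)"
proof -
  have 2: "cmod (minner m d (applyA m d A1 G) G) \<le> ((2/c0) * (c0/2)^2 * mn2 m d G + mn2 m d G / (2/c0)) / 2"
    by (rule A1_bound) (use c0 in simp)
  have "((2/c0) * (c0/2)^2 * mn2 m d G + mn2 m d G / (2/c0)) / 2 = (c0 * mn2 m d G) / 2"
    using c0 by (simp add: field_simps power2_eq_square)
  also have "\<dots> \<le> q0 G / 2" using q0_ge[of G] by simp
  finally have 3: "cmod (minner m d (applyA m d A1 G) G) \<le> q0 G / 2" using 2 by simp
  have "- cmod (minner m d (applyA m d A1 G) G) \<le> Re (minner m d (applyA m d A1 G) G)"
    using abs_Re_le_cmod[of "minner m d (applyA m d A1 G) G"] by linarith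
  thus ?thesis unfolding applyA_split using 3 by (simp add: q0_def)
qed

end




definition boxset :: "nat \<Rightarrow> nat \<Rightarrow> (nat \<Rightarrow> nat) set" where
  "boxset d k = {f. (\<forall>i<d. f i < k) \<and> (\<forall>i. d \<le> i \<longrightarrow> f i = 0)}"

lemma boxset_Suc: "boxset (Suc d) k = (\<lambda>(f,a). f(d:=a)) ` (boxset d k \<times> {..<k})"
proof (rule Set.set_eqI, rule HOL.iffI)
  fix g assume g: "g \<in> boxset (Suc d) k"
  have "g = (\<lambda>(f,a). f(d:=a)) (g(d:=0), g d)" by simp
  moreover have "(g(d:=0), g d) \<in> boxset d k \<times> {..<k}"
    using g by (auto simp: boxset_def)
  ultimately show "g \<in> (\<lambda>(f,a). f(d:=a)) ` (boxset d k \<times> {..<k})" by blast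
next
  fix g assume "g \<in> (\<lambda>(f,a). f(d:=a)) ` (boxset d k \<times> {..<k})"
  then show "g \<in> boxset (Suc d) k" by (auto simp: boxset_def less_Suc_eq)
qed

lemma boxset_inj: "inj_on (\<lambda>(f,a). f(d:=a)) (boxset d k \<times> {..<k})"
proof (rule inj_onI, clarify)
  fix f a g b assume f: "f \<in> boxset d k" and g: "g \<in> boxset d k" and e: "f(d := a) = g(d := b)"
  have "a = b" using fun_cong[OF e, of d] by simp
  moreover have "f = g"
  proof
    fix i show "f i = g i"
      using fun_cong[OF e, of i] f g by (cases "i = d") (auto simp: boxset_def)
  qed
  ultimately show "f = g \<and> a = b" by simp
qed

lemma boxset_card: "finite (boxset d k) \<and> card (boxset d k) = k ^ d"
proof (induction d)
  case 0
  have "boxset 0 k = {\<lambda>_. 0}" by (auto simp: boxset_def)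
  then show ?case by simp
next
  case (Suc d)
  show ?case unfolding boxset_Suc
    using Suc boxset_inj[of d k] by (simp add: card_image card_cartesian_product)
qed

lemma torus_boxset: "torus n d = boxset d n"
  by (simp add: torus_def boxset_def)

lemma modsum: "(a::nat) < n \<Longrightarrow> b < n \<Longrightarrow> (a + b) mod n = (if a + b < n then a + b else a + b - n)"
  by (simp add: le_mod_geq)

locale tor =
  fixes n d l :: nat
  assumes d1: "d \<ge> 1" and l2: "l \<ge> 2" and ln: "l - 1 < n"
begin

lemma n0: "n > 0" using ln by simp
lemma ln': "l \<le> n" using ln l2 by simp

abbreviation "T \<equiv> torus n d"

lemma finT: "finite T" using boxset_card torus_boxset by simp

lemma tadd_in: "tadd n d x y \<in> T"
  using n0 by (simp add: tadd_def torus_def)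

lemma tadd_assoc: "tadd n d (tadd n d x a) b = tadd n d x (\<lambda>i. a i + b i)"
  by (auto simp: tadd_def mod_add_left_eq add.assoc)

definition tsub :: "(nat \<Rightarrow> nat) \<Rightarrow> (nat \<Rightarrow> nat) \<Rightarrow> (nat \<Rightarrow> nat)" where
  "tsub y q = (\<lambda>i. if i < d then (y i + (n - q i)) mod n else 0)"

lemma tsub_tadd:
  assumes x: "x \<in> T" and q: "\<forall>i<d. q i \<le> n"
  shows "tsub (tadd n d x q) q = x"
proof
  fix i show "tsub (tadd n d x q) q i = x i"
  proof (cases "i < d")
    case True
    have "((x i + q i) mod n + (n - q i)) mod n = (x i + q i + (n - q i)) mod n"
      by (simp add: mod_add_left_eq)
    also have "x i + q i + (n - q i) = x i + n" using q True by simp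
    also have "(x i + n) mod n = x i" using x True by (simp add: torus_def)
    finally show ?thesis using True by (simp add: tsub_def tadd_def)
  next
    case False then show ?thesis using x by (simp add: tsub_def torus_def)
  qed
qed

lemma tadd_inj: "\<forall>i<d. q i \<le> n \<Longrightarrow> inj_on (\<lambda>x. tadd n d x q) T"
  by (rule inj_on_inverseI[where g = "\<lambda>y. tsub y q"]) (simp add: tsub_tadd)

lemma tadd_image: "\<forall>i<d. q i \<le> n \<Longrightarrow> (\<lambda>x. tadd n d x q) ` T = T"
  using tadd_inj finT by (intro endo_inj_surj) (auto simp: tadd_in)

lemma sum_translate:
  assumes "\<forall>i<d. q i \<le> n"
  shows "(\<Sum>x\<in>T. f (tadd n d x q)) = (\<Sum>y\<in>T. f y)"
proof -
  have "(\<Sum>y\<in>T. f y) = (\<Sum>y\<in>(\<lambda>x. tadd n d x q) ` T. f y)" using tadd_image[OF assms] by simp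
  also have "\<dots> = (\<Sum>x\<in>T. f (tadd n d x q))" using tadd_inj[OF assms] by (simp add: sum.reindex)
  finally show ?thesis by simp
qed

definition Qset :: "(nat \<Rightarrow> nat) set" where
  "Qset = {q. (\<forall>i<d. 1 \<le> q i \<and> q i \<le> l - 1) \<and> (\<forall>i. d \<le> i \<longrightarrow> q i = 0)}"

lemma cube_eq: "cube n d l x = (\<lambda>q. tadd n d x q) ` Qset"
  by (auto simp: cube_def Qset_def)

definition Rbox :: "(nat \<Rightarrow> nat) \<Rightarrow> (nat \<Rightarrow> nat) set" where
  "Rbox x = (\<lambda>q. tadd n d x q) ` boxset d l"

lemma Qset_box: "Qset \<subseteq> boxset d l"
  using l2 by (auto simp: Qset_def boxset_def)

lemma cube_Rbox: "cube n d l x \<subseteq> Rbox x"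
  unfolding cube_eq Rbox_def using Qset_box by blast

lemma cube_T: "cube n d l x \<subseteq> T"
  unfolding cube_eq using tadd_in by blast

lemma Rbox_T: "Rbox x \<subseteq> T"
  unfolding Rbox_def using tadd_in by blast

lemma finite_cube: "finite (cube n d l x)"
  using cube_T finT finite_subset by blast

lemma outside_shift:
  assumes y: "y \<in> T" and yR: "y \<notin> Rbox x" and j: "j < d" and x: "x \<in> T"
  shows "tadd n d y (unitv j) \<notin> cube n d l x"
proof
  assume "tadd n d y (unitv j) \<in> cube n d l x"
  then obtain q where q: "q \<in> Qset" and e: "tadd n d y (unitv j) = tadd n d x q"
    unfolding cube_eq by blast
  define q' where "q' = q(j := q j - 1)"
  have q'b: "q' \<in> boxset d l" using q l2 by (auto simp: q'_def Qset_def boxset_def)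
  have "y = tadd n d x q'"
  proof
    fix i show "y i = tadd n d x q' i"
    proof (cases "i < d")
      case False then show ?thesis using y by (simp add: torus_def tadd_def)
    next
      case True
      have ei: "(y i + unitv j i) mod n = (x i + q i) mod n" using fun_cong[OF e, of i] True by (simp add: tadd_def)
      have yi: "y i < n" and xi: "x i < n" using y x True by (auto simp: torus_def)
      have qi: "1 \<le> q i" "q i < n" using q True ln by (auto simp: Qset_def)
      show ?thesis
      proof (cases "i = j")
        case True
        have n1: "1 < n" using ln l2 by simp
        have "(y j + 1) mod n = (x j + q j) mod n" using ei True by (simp add: unitv_def)
        moreover have "y j < n" "x j < n" "1 \<le> q j" "q j < n" using yi xi qi True by auto
        ultimately have "y j = (x j + (q j - 1)) mod n"
          using modsum[of "y j" n 1] modsum[of "x j" n "q j"] modsum[of "x j" n "q j - 1"] n1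
          by (auto split: if_splits)
        then show ?thesis using True \<open>i<d\<close> by (simp add: tadd_def q'_def)
      next
        case False
        then show ?thesis using ei \<open>i<d\<close> yi by (simp add: unitv_def tadd_def q'_def)
      qed
    qed
  qed
  then have "y \<in> Rbox x" using q'b unfolding Rbox_def by blast
  with yR show False by simp
qed

lemma walk:
  fixes w :: "(nat \<Rightarrow> nat) \<Rightarrow> complex"
  assumes x: "x \<in> T" and out: "\<forall>y. y \<notin> cube n d l x \<longrightarrow> w y = 0"
    and gr: "\<forall>y\<in>T. w (tadd n d y (unitv 0)) = w y"
  shows "w z = 0"
proof (cases "z \<in> cube n d l x")
  case False then show ?thesis using out by simp
next
  case True
  then obtain q where q: "q \<in> Qset" and z: "z = tadd n d x q" unfolding cube_eq by blast
  have d0: "0 < d" using d1 by simp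
  have "\<forall>s. s \<le> q 0 \<longrightarrow> w (tadd n d x (q(0:=s))) = 0"
  proof (intro allI)
    fix s show "s \<le> q 0 \<longrightarrow> w (tadd n d x (q(0:=s))) = 0"
    proof (induction s)
      case 0
      have "tadd n d x (q(0:=0)) \<notin> cube n d l x"
      proof
        assume "tadd n d x (q(0:=0)) \<in> cube n d l x"
        then obtain q' where q': "q' \<in> Qset" and e: "tadd n d x (q(0:=0)) = tadd n d x q'"
          unfolding cube_eq by blast
        have "x 0 mod n = (x 0 + q' 0) mod n" using fun_cong[OF e, of 0] d0 by (simp add: tadd_def)
        moreover have "x 0 < n" using x d0 by (simp add: torus_def)
        moreover have "1 \<le> q' 0" "q' 0 < n" using q' d0 ln by (auto simp: Qset_def)
        ultimately show False using modsum[of "x 0" n "q' 0"] by (simp split: if_splits)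
      qed
      then show ?case using out by blast
    next
      case (Suc s)
      show ?case
      proof
        assume s: "Suc s \<le> q 0"
        have "tadd n d (tadd n d x (q(0:=s))) (unitv 0) = tadd n d x (q(0:=Suc s))"
          unfolding tadd_assoc by (rule arg_cong[where f="tadd n d x"]) (auto simp: unitv_def)
        then show "w (tadd n d x (q(0:=Suc s))) = 0"
          using Suc s gr tadd_in by (metis Suc_leD)
      qed
    qed
  qed
  then show ?thesis using z by (metis fun_upd_triv order_refl)
qed

lemma card_S:
  "card {x \<in> T. y \<in> Rbox x} \<le> l ^ d"
proof -
  have "{x \<in> T. y \<in> Rbox x} \<subseteq> (\<lambda>q. tsub y q) ` boxset d l"
  proof
    fix x assume "x \<in> {x \<in> T. y \<in> Rbox x}"
    then obtain q where x: "x \<in> T" and q: "q \<in> boxset d l" and yq: "y = tadd n d x q"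
      unfolding Rbox_def by blast
    have "\<forall>i<d. q i \<le> n" using q ln' by (auto simp: boxset_def)
    then have "x = tsub y q" using tsub_tadd x yq by simp
    then show "x \<in> (\<lambda>q. tsub y q) ` boxset d l" using q by blast
  qed
  then have "card {x \<in> T. y \<in> Rbox x} \<le> card ((\<lambda>q. tsub y q) ` boxset d l)"
    using boxset_card by (intro card_mono) auto
  also have "\<dots> \<le> card (boxset d l)" by (rule card_image_le) (use boxset_card in auto)
  finally show ?thesis using boxset_card by simp
qed

lemma sum_Rbox_le:
  assumes nn: "\<forall>y. f y \<ge> (0::real)"
  shows "(\<Sum>x\<in>T. \<Sum>y\<in>Rbox x. f y) \<le> real (l ^ d) * (\<Sum>y\<in>T. f y)"
proof -
  have "(\<Sum>x\<in>T. \<Sum>y\<in>Rbox x. f y) \<le> (\<Sum>x\<in>T. \<Sum>q\<in>boxset d l. f (tadd n d x q))"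
    unfolding Rbox_def
  proof (intro sum_mono)
    fix x
    have "sum f ((\<lambda>q. tadd n d x q) ` boxset d l) \<le> sum (f \<circ> (\<lambda>q. tadd n d x q)) (boxset d l)"
      by (rule sum_image_le) (use boxset_card nn in auto)
    then show "sum f ((\<lambda>q. tadd n d x q) ` boxset d l) \<le> (\<Sum>q\<in>boxset d l. f (tadd n d x q))"
      by (simp add: o_def)
  qed
  also have "\<dots> = (\<Sum>q\<in>boxset d l. \<Sum>x\<in>T. f (tadd n d x q))" by (rule sum.swap)
  also have "\<dots> = (\<Sum>q\<in>boxset d l. \<Sum>y\<in>T. f y)"
  proof (rule sum.cong[OF refl])
    fix q assume "q \<in> boxset d l"
    then have "\<forall>i<d. q i \<le> n" using ln' by (auto simp: boxset_def)
    then show "(\<Sum>x\<in>T. f (tadd n d x q)) = (\<Sum>y\<in>T. f y)" by (rule sum_translate)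
  qed
  also have "\<dots> = real (l ^ d) * (\<Sum>y\<in>T. f y)" using boxset_card by simp
  finally show ?thesis .
qed

end



lemma grad_add: "grad n d (\<lambda>y k. f y k + g y k) x = (\<lambda>k j. grad n d f x k j + grad n d g x k j)"
  by (simp add: grad_def fun_eq_iff)
lemma grad_diff: "grad n d (\<lambda>y k. f y k - g y k) x = (\<lambda>k j. grad n d f x k j - grad n d g x k j)"
  by (simp add: grad_def fun_eq_iff)
lemma grad_scale: "grad n d (\<lambda>y k. c * f y k) x = (\<lambda>k j. c * grad n d f x k j)"
  by (simp add: grad_def fun_eq_iff right_diff_distrib)
lemma grad_zero: "grad n d (\<lambda>y k. 0) x = (\<lambda>k j. 0)"
  by (simp add: grad_def fun_eq_iff)

lemma formA_add_left: "formA n d m A (\<lambda>y k. f y k + g y k) \<psi> = formA n d m A f \<psi> + formA n d m A g \<psi>"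
  by (simp add: formA_def grad_add applyA_add minner_add_left sum.distrib)
lemma formA_diff_left: "formA n d m A (\<lambda>y k. f y k - g y k) \<psi> = formA n d m A f \<psi> - formA n d m A g \<psi>"
  by (simp add: formA_def grad_diff applyA_diff minner_diff_left sum_subtractf)
lemma formA_scale_left: "formA n d m A (\<lambda>y k. c * f y k) \<psi> = c * formA n d m A f \<psi>"
  by (simp add: formA_def grad_scale applyA_scale minner_scale_left sum_distrib_left)
lemma formA_zero_left: "formA n d m A (\<lambda>y k. 0) \<psi> = 0"
  proof -
  have "applyA m d A (\<lambda>k j. 0) = (\<lambda>i j. 0)" by (simp add: applyA_def)
  then show ?thesis by (simp add: formA_def grad_zero minner_def)
qed
lemma formA_add_right: "formA n d m A \<psi> (\<lambda>y k. f y k + g y k) = formA n d m A \<psi> f + formA n d m A \<psi> g"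
  by (simp add: formA_def grad_add minner_add_right sum.distrib)
lemma formA_diff_right: "formA n d m A \<psi> (\<lambda>y k. f y k - g y k) = formA n d m A \<psi> f - formA n d m A \<psi> g"
  by (simp add: formA_def grad_diff minner_diff_right sum_subtractf)
lemma formA_scale_right: "formA n d m A \<psi> (\<lambda>y k. c * f y k) = cnj c * formA n d m A \<psi> f"
  by (simp add: formA_def grad_scale minner_scale_right sum_distrib_left)
lemma formA_zero_right: "formA n d m A \<psi> (\<lambda>y k. 0) = 0"
  by (simp add: formA_def grad_zero minner_def)

lemma formA_sum_left:
  assumes "finite J"
  shows "formA n d m A (\<lambda>y k. \<Sum>j\<in>J. c j * u j y k) \<psi> = (\<Sum>j\<in>J. c j * formA n d m A (u j) \<psi>)"
  using assms
proof (induction J rule: finite_induct)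
  case empty then show ?case by (simp add: formA_zero_left)
next
  case (insert a J)
  have "formA n d m A (\<lambda>y k. \<Sum>j\<in>insert a J. c j * u j y k) \<psi>
      = formA n d m A (\<lambda>y k. c a * u a y k + (\<Sum>j\<in>J. c j * u j y k)) \<psi>"
    using insert by simp
  also have "\<dots> = c a * formA n d m A (u a) \<psi> + formA n d m A (\<lambda>y k. \<Sum>j\<in>J. c j * u j y k) \<psi>"
    by (simp add: formA_add_left formA_scale_left)
  finally show ?case using insert by simp
qed

lemma formA_sum_right:
  assumes "finite J"
  shows "formA n d m A \<psi> (\<lambda>y k. \<Sum>j\<in>J. c j * u j y k) = (\<Sum>j\<in>J. cnj (c j) * formA n d m A \<psi> (u j))"
  using assms
proof (induction J rule: finite_induct)
  case empty then show ?case by (simp add: formA_zero_right)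
next
  case (insert a J)
  have "formA n d m A \<psi> (\<lambda>y k. \<Sum>j\<in>insert a J. c j * u j y k)
      = formA n d m A \<psi> (\<lambda>y k. c a * u a y k + (\<Sum>j\<in>J. c j * u j y k))"
    using insert by simp
  also have "\<dots> = cnj (c a) * formA n d m A \<psi> (u a) + formA n d m A \<psi> (\<lambda>y k. \<Sum>j\<in>J. c j * u j y k)"
    by (simp add: formA_add_right formA_scale_right)
  finally show ?case using insert by simp
qed

locale setting = coef m d c0 A A0 A1 + tor n d l for m d c0 A A0 A1 n l
begin

abbreviation "H x \<equiv> Hcube n d m l x"

lemma Re_formA: "Re (formA n d m B f g) = (\<Sum>y\<in>T. Re (minner m d (applyA m d B (grad n d f y)) (grad n d g y)))"
  by (simp add: formA_def)

lemma H_comb: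
  assumes "finite J" "\<forall>j\<in>J. u j \<in> H x"
  shows "(\<lambda>y k. \<Sum>j\<in>J. c j * u j y k) \<in> H x"
proof -
  have "(\<Sum>y\<in>T. \<Sum>j\<in>J. c j * u j y k) = 0" if "k < m" for k
  proof -
    have "(\<Sum>y\<in>T. \<Sum>j\<in>J. c j * u j y k) = (\<Sum>j\<in>J. c j * (\<Sum>y\<in>T. u j y k))"
      by (simp add: sum.swap[of _ T] sum_distrib_left)
    also have "\<dots> = 0" using assms that by (simp add: Hcube_def XN_def)
    finally show ?thesis .
  qed
  then show ?thesis using assms by (simp add: Hcube_def XN_def)
qed

lemma H_diff:
  assumes "f \<in> H x" "g \<in> H x"
  shows "(\<lambda>y k. f y k - g y k) \<in> H x"
  using assms by (auto simp: Hcube_def XN_def sum_subtractf)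

lemma inj_H:
  assumes x: "x \<in> T" and w: "w \<in> H x" and z: "formA n d m A w w = 0"
  shows "w = (\<lambda>y k. 0)"
proof -
  have nn: "\<forall>y\<in>T. 0 \<le> c0 * mn2 m d (grad n d w y) / 2"
    using c0 mn2_nonneg by simp
  have "(\<Sum>y\<in>T. c0 * mn2 m d (grad n d w y) / 2) \<le> (\<Sum>y\<in>T. q0 (grad n d w y) / 2)"
    using q0_ge by (intro sum_mono) simp
  also have "\<dots> \<le> Re (formA n d m A w w)"
    unfolding Re_formA by (intro sum_mono coercive_A)
  also have "\<dots> = 0" using z by simp
  finally have "(\<Sum>y\<in>T. c0 * mn2 m d (grad n d w y) / 2) \<le> 0" .
  then have "(\<Sum>y\<in>T. c0 * mn2 m d (grad n d w y) / 2) = 0"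
  proof -
    have "0 \<le> (\<Sum>y\<in>T. c0 * mn2 m d (grad n d w y) / 2)" using nn by (intro sum_nonneg) auto
    then show ?thesis using \<open>(\<Sum>y\<in>T. c0 * mn2 m d (grad n d w y) / 2) \<le> 0\<close> by linarith
  qed
  then have "\<forall>y\<in>T. c0 * mn2 m d (grad n d w y) / 2 = 0"
    using nn finT by (simp add: sum_nonneg_eq_0_iff)
  then have g0: "\<forall>y\<in>T. \<forall>k<m. grad n d w y k 0 = 0"
    using c0 d1 by (auto simp: mn2_zero_iff)
  show ?thesis
  proof (intro ext)
    fix z k show "w z k = 0"
    proof (cases "k < m")
      case False then show ?thesis using w by (simp add: Hcube_def XN_def)
    next
      case True
      show ?thesis
        using walk[OF x, of "\<lambda>y. w y k" z] w g0 True by (simp add: Hcube_def grad_def)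
    qed
  qed
qed

end



lemma solve_system:
  fixes Mt :: "complex mat"
  assumes M: "Mt \<in> carrier_mat D D" and inj: "\<forall>c \<in> carrier_vec D. Mt *\<^sub>v c = 0\<^sub>v D \<longrightarrow> c = 0\<^sub>v D"
    and g: "g \<in> carrier_vec D"
  shows "\<exists>c \<in> carrier_vec D. Mt *\<^sub>v c = g"
proof -
  have "det Mt \<noteq> 0" using det_0_iff_vec_prod_zero_field[OF M] inj by auto
  then have "Mt \<in> Units (ring_mat TYPE(complex) D ())" by (rule det_non_zero_imp_unit[OF M])
  then obtain Bi where Bi: "Bi \<in> carrier_mat D D" and MB: "Mt * Bi = 1\<^sub>m D"
    unfolding Units_def by (auto simp: ring_mat_simps)
  have "Mt *\<^sub>v (Bi *\<^sub>v g) = g"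
    using assoc_mult_mat_vec[OF M Bi g] MB one_mult_mat_vec[OF g] by simp
  moreover have "Bi *\<^sub>v g \<in> carrier_vec D" using Bi g by simp
  ultimately show ?thesis by blast
qed




context setting begin

definition p0 :: "(nat \<Rightarrow> nat) \<Rightarrow> (nat \<Rightarrow> nat)" where
  "p0 x = tadd n d x (\<lambda>i. if i < d then 1 else 0)"
definition Cp where "Cp x = cube n d l x - {p0 x}"
definition Pset where "Pset x = Cp x \<times> {..<m}"
definition Bp :: "(nat \<Rightarrow> nat) \<Rightarrow> (nat \<Rightarrow> nat) \<times> nat \<Rightarrow> cfield" where
  "Bp x pk = (\<lambda>y k'. (if y = fst pk \<and> k' = snd pk then 1 else 0) - (if y = p0 x \<and> k' = snd pk then 1 else 0))"

lemma p0_cube: "p0 x \<in> cube n d l x"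
  unfolding cube_eq p0_def Qset_def using l2 by auto

lemma finite_Pset: "finite (Pset x)"
  unfolding Pset_def Cp_def using finite_cube by simp

lemma sum_ind:
  assumes "p \<in> T"
  shows "(\<Sum>y\<in>T. (if y = p \<and> Q then 1 else 0) :: complex) = (if Q then 1 else 0)"
  using assms finT by (cases Q) simp_all

lemma Bp_in:
  assumes pk: "pk \<in> Pset x"
  shows "Bp x pk \<in> H x"
proof -
  have p: "fst pk \<in> cube n d l x" "fst pk \<noteq> p0 x" and k: "snd pk < m"
    using pk by (auto simp: Pset_def Cp_def)
  have pT: "fst pk \<in> T" and p0T: "p0 x \<in> T" using p cube_T p0_cube by auto
  show ?thesis
    unfolding Hcube_def XN_def Bp_def
    using p p0_cube[of x] pT p0T k sum_ind[OF pT] sum_ind[OF p0T]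
    by (auto simp: sum_subtractf)
qed

lemma expand:
  assumes psi: "\<psi> \<in> H x"
  shows "\<psi> = (\<lambda>y k. \<Sum>pk\<in>Pset x. \<psi> (fst pk) (snd pk) * Bp x pk y k)"
proof (intro ext)
  fix y k
  have fin: "finite (Cp x)" using finite_cube by (simp add: Cp_def)
  have "(\<Sum>pk\<in>Pset x. \<psi> (fst pk) (snd pk) * Bp x pk y k)
      = (\<Sum>pk\<in>Pset x. if pk = (y,k) then \<psi> y k else 0)
        - (\<Sum>pk\<in>Pset x. if y = p0 x \<and> snd pk = k then \<psi> (fst pk) k else 0)"
    unfolding sum_subtractf[symmetric]
    by (rule sum.cong) (auto simp: Bp_def)
  also have "(\<Sum>pk\<in>Pset x. if pk = (y,k) then \<psi> y k else 0) = (if (y,k) \<in> Pset x then \<psi> y k else 0)"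
    using finite_Pset by (simp add: sum.delta')
  also have "(\<Sum>pk\<in>Pset x. if y = p0 x \<and> snd pk = k then \<psi> (fst pk) k else 0)
      = (\<Sum>p\<in>Cp x. \<Sum>k'<m. if y = p0 x \<and> k' = k then \<psi> p k else 0)"
    unfolding Pset_def sum.cartesian_product by (rule sum.cong) auto
  also have "\<dots> = (if y = p0 x \<and> k < m then (\<Sum>p\<in>Cp x. \<psi> p k) else 0)"
    by (cases "y = p0 x") (auto simp: sum.delta)
  finally have eq: "(\<Sum>pk\<in>Pset x. \<psi> (fst pk) (snd pk) * Bp x pk y k)
     = (if (y,k) \<in> Pset x then \<psi> y k else 0) - (if y = p0 x \<and> k < m then (\<Sum>p\<in>Cp x. \<psi> p k) else 0)" .
  have out: "\<And>y k. y \<notin> cube n d l x \<Longrightarrow> \<psi> y k = 0" and km: "\<And>y k. m \<le> k \<Longrightarrow> \<psi> y k = 0"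
    using psi by (auto simp: Hcube_def XN_def)
  show "\<psi> y k = (\<Sum>pk\<in>Pset x. \<psi> (fst pk) (snd pk) * Bp x pk y k)"
  proof (cases "y = p0 x")
    case True
    show ?thesis
    proof (cases "k < m")
      case km': True
      have "(\<Sum>y\<in>T. \<psi> y k) = 0" using psi km' by (simp add: Hcube_def XN_def)
      moreover have "(\<Sum>y\<in>T. \<psi> y k) = (\<Sum>y\<in>cube n d l x. \<psi> y k)"
        using out cube_T finT by (intro sum.mono_neutral_right) auto
      moreover have "(\<Sum>y\<in>cube n d l x. \<psi> y k) = \<psi> (p0 x) k + (\<Sum>p\<in>Cp x. \<psi> p k)"
        unfolding Cp_def using p0_cube[of x] finite_cube[of x] by (simp add: sum.remove)
      ultimately have "\<psi> (p0 x) k = - (\<Sum>p\<in>Cp x. \<psi> p k)" by (simp add: eq_neg_iff_add_eq_0)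
      moreover have "(y,k) \<notin> Pset x" using True by (simp add: Pset_def Cp_def)
      ultimately show ?thesis using eq True km' by simp
    next
      case False
      then show ?thesis using eq km[of k y] by (simp add: Pset_def)
    qed
  next
    case False
    have "(y,k) \<notin> Pset x \<Longrightarrow> \<psi> y k = 0"
      using out km False by (force simp: Pset_def Cp_def)
    then show ?thesis using eq False by auto
  qed
qed

lemma exist_proj:
  assumes x: "x \<in> T"
  shows "\<exists>v\<in>H x. \<forall>\<psi>\<in>H x. formA n d m A v \<psi> = formA n d m A \<phi> \<psi>"
proof -
  define D where "D = card (Pset x)"
  obtain E where E: "bij_betw E {0..<D} (Pset x)"
    using ex_bij_betw_nat_finite[OF finite_Pset[of x]] D_def by blast
  define Bj where "Bj j = Bp x (E j)" for j
  have BjH: "\<forall>j\<in>{0..<D}. Bj j \<in> H x"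
    using bij_betwE[OF E] Bp_in unfolding Bj_def by blast
  define Mt where "Mt = mat D D (\<lambda>(i,j). formA n d m A (Bj j) (Bj i))"
  define g where "g = vec D (\<lambda>i. formA n d m A \<phi> (Bj i))"
  define V where "V c = (\<lambda>y k. \<Sum>j\<in>{0..<D}. c $ j * Bj j y k)" for c :: "complex vec"
  have MV: "(Mt *\<^sub>v c) $ i = formA n d m A (V c) (Bj i)" if c: "c \<in> carrier_vec D" and i: "i < D" for c i
  proof -
    have "(Mt *\<^sub>v c) $ i = (\<Sum>j\<in>{0..<D}. formA n d m A (Bj j) (Bj i) * c $ j)"
      using c i by (simp add: Mt_def scalar_prod_def)
    also have "\<dots> = formA n d m A (V c) (Bj i)"
      unfolding V_def by (subst formA_sum_left) (auto simp: mult.commute)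
    finally show ?thesis .
  qed
  have VH: "V c \<in> H x" for c unfolding V_def by (rule H_comb) (use BjH in auto)
  have expand': "\<psi> = (\<lambda>y k. \<Sum>j\<in>{0..<D}. \<psi> (fst (E j)) (snd (E j)) * Bj j y k)" if "\<psi> \<in> H x" for \<psi>
  proof -
    have "\<psi> = (\<lambda>y k. \<Sum>pk\<in>Pset x. \<psi> (fst pk) (snd pk) * Bp x pk y k)" by (rule expand[OF that])
    also have "\<dots> = (\<lambda>y k. \<Sum>j\<in>{0..<D}. \<psi> (fst (E j)) (snd (E j)) * Bj j y k)"
      unfolding Bj_def
      by (intro ext) (rule sum.reindex_bij_betw[OF E, symmetric, where g = "\<lambda>pk. \<psi> (fst pk) (snd pk) * Bp x pk _ _"])
    finally show ?thesis .
  qed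
  have basis: "formA n d m A v \<psi> = formA n d m A w \<psi>"
    if "\<forall>i<D. formA n d m A v (Bj i) = formA n d m A w (Bj i)" "\<psi> \<in> H x" for v w \<psi>
  proof -
    have "formA n d m A v \<psi> = (\<Sum>j\<in>{0..<D}. cnj (\<psi> (fst (E j)) (snd (E j))) * formA n d m A v (Bj j))"
      by (subst expand'[OF that(2)]) (rule formA_sum_right, simp)
    also have "\<dots> = (\<Sum>j\<in>{0..<D}. cnj (\<psi> (fst (E j)) (snd (E j))) * formA n d m A w (Bj j))"
      using that(1) by simp
    also have "\<dots> = formA n d m A w \<psi>"
      by (subst (2) expand'[OF that(2)]) (rule formA_sum_right[symmetric], simp)
    finally show ?thesis .
  qed
  have Veval: "V c (fst (E i)) (snd (E i)) = c $ i" if i: "i < D" for c i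
  proof -
    have Ei: "E i \<in> Pset x" using E i by (auto simp: bij_betw_def)
    have np0: "fst (E i) \<noteq> p0 x" using Ei by (auto simp: Pset_def Cp_def)
    have "V c (fst (E i)) (snd (E i)) = (\<Sum>j\<in>{0..<D}. c $ j * (if j = i then 1 else 0))"
    proof (unfold V_def, rule sum.cong[OF refl])
      fix j assume j: "j \<in> {0..<D}"
      have "(E i = E j) = (j = i)" using E i j unfolding bij_betw_def inj_on_def by auto
      then have "Bj j (fst (E i)) (snd (E i)) = (if j = i then 1 else 0)"
        using np0 by (auto simp: Bj_def Bp_def prod_eq_iff)
      then show "c $ j * Bj j (fst (E i)) (snd (E i)) = c $ j * (if j = i then 1 else 0)" by simp
    qed
    also have "\<dots> = (\<Sum>j\<in>{0..<D}. if j = i then c $ j else 0)" by (rule sum.cong) auto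
    also have "\<dots> = c $ i" using i by (simp add: sum.delta')
    finally show ?thesis .
  qed
  have inj: "\<forall>c \<in> carrier_vec D. Mt *\<^sub>v c = 0\<^sub>v D \<longrightarrow> c = 0\<^sub>v D"
  proof (intro ballI impI)
    fix c :: "complex vec" assume c: "c \<in> carrier_vec D" and z: "Mt *\<^sub>v c = 0\<^sub>v D"
    have "\<forall>i<D. formA n d m A (V c) (Bj i) = formA n d m A (\<lambda>y k. 0) (Bj i)"
      using MV[OF c] z by (metis formA_zero_left index_zero_vec(1))
    then have "formA n d m A (V c) (V c) = formA n d m A (\<lambda>y k. 0) (V c)"
      by (rule basis) (rule VH)
    then have "V c = (\<lambda>y k. 0)" using inj_H[OF x VH] by (simp add: formA_zero_left)
    then have "\<forall>i<D. c $ i = 0" using Veval by (metis)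
    then show "c = 0\<^sub>v D" using c by (intro eq_vecI) auto
  qed
  have Mc: "Mt \<in> carrier_mat D D" by (simp add: Mt_def)
  have gc: "g \<in> carrier_vec D" by (simp add: g_def)
  obtain c where c: "c \<in> carrier_vec D" and Mcg: "Mt *\<^sub>v c = g"
    using solve_system[OF Mc inj gc] by blast
  have "\<forall>i<D. formA n d m A (V c) (Bj i) = formA n d m A \<phi> (Bj i)"
    using MV[OF c] Mcg by (auto simp: g_def)
  then have "\<forall>\<psi>\<in>H x. formA n d m A (V c) \<psi> = formA n d m A \<phi> \<psi>"
    using basis by blast
  then show ?thesis using VH by blast
qed

lemma proj_prop:
  assumes x: "x \<in> T"
  shows "proj n d m l A x \<phi> \<in> H x \<and> (\<forall>\<psi>\<in>H x. formA n d m A (proj n d m l A x \<phi>) \<psi> = formA n d m A \<phi> \<psi>)"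
proof -
  have "\<exists>!v. v \<in> H x \<and> (\<forall>\<psi>\<in>H x. formA n d m A v \<psi> = formA n d m A \<phi> \<psi>)"
  proof (rule ex_ex1I)
    show "\<exists>v. v \<in> H x \<and> (\<forall>\<psi>\<in>H x. formA n d m A v \<psi> = formA n d m A \<phi> \<psi>)"
      using exist_proj[OF x] by blast
  next
    fix v w assume v: "v \<in> H x \<and> (\<forall>\<psi>\<in>H x. formA n d m A v \<psi> = formA n d m A \<phi> \<psi>)"
      and w: "w \<in> H x \<and> (\<forall>\<psi>\<in>H x. formA n d m A w \<psi> = formA n d m A \<phi> \<psi>)"
    have dH: "(\<lambda>y k. v y k - w y k) \<in> H x" using v w by (intro H_diff) auto
    have "formA n d m A (\<lambda>y k. v y k - w y k) (\<lambda>y k. v y k - w y k) = 0"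
      unfolding formA_diff_left using v w dH by simp
    then have "(\<lambda>y k. v y k - w y k) = (\<lambda>y k. 0)" by (rule inj_H[OF x dH])
    then show "v = w" by (metis (no_types) eq_iff_diff_eq_0 ext)
  qed
  then show ?thesis unfolding proj_def by (rule theI')
qed

end



lemma applyA_sum: "finite S \<Longrightarrow> applyA m d A (\<lambda>k j. \<Sum>x\<in>S. G x k j) = (\<lambda>i j. \<Sum>x\<in>S. applyA m d A (G x) i j)"
proof (induction S rule: finite_induct)
  case empty then show ?case by (simp add: applyA_def)
next
  case (insert a S)
  then show ?case by (simp add: applyA_add)
qed

lemma minner_sum_left: "finite S \<Longrightarrow> minner m d (\<lambda>i j. \<Sum>x\<in>S. P x i j) Q = (\<Sum>x\<in>S. minner m d (P x) Q)"
proof (induction S rule: finite_induct)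
  case empty then show ?case by (simp add: minner_def)
next
  case (insert a S)
  then show ?case by (simp add: minner_add_left)
qed

lemma minner_sum_right: "finite S \<Longrightarrow> minner m d Q (\<lambda>i j. \<Sum>x\<in>S. P x i j) = (\<Sum>x\<in>S. minner m d Q (P x))"
proof (induction S rule: finite_induct)
  case empty then show ?case by (simp add: minner_def)
next
  case (insert a S)
  then show ?case by (simp add: minner_add_right)
qed

context setting begin

lemma q0_scale: "q0 (\<lambda>k j. c * F k j) = (cmod c)^2 * q0 F"
proof -
  have "minner m d (applyA m d A0 (\<lambda>k j. c * F k j)) (\<lambda>k j. c * F k j) = (c * cnj c) * minner m d (applyA m d A0 F) F"
    by (simp add: applyA_scale minner_scale_left minner_scale_right)
  also have "c * cnj c = complex_of_real ((cmod c)^2)"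
    by (rule complex_norm_square[symmetric])
  finally show ?thesis by (simp add: q0_def)
qed

lemma q0_cong: "(\<And>i j. j < d \<Longrightarrow> F i j = F' i j) \<Longrightarrow> q0 F = q0 F'"
proof -
  assume e: "\<And>i j. j < d \<Longrightarrow> F i j = F' i j"
  have "applyA m d A0 F = applyA m d A0 F'"
    unfolding applyA_def using e by (intro ext sum.cong) auto
  moreover have "minner m d P F = minner m d P F'" for P
    unfolding minner_def using e by (intro sum.cong) auto
  ultimately show ?thesis by (simp add: q0_def)
qed

lemma q0_sum:
  assumes S: "finite S"
  shows "q0 (\<lambda>k j. \<Sum>x\<in>S. G x k j) \<le> real (card S) * (\<Sum>x\<in>S. q0 (G x))"
proof -
  have "q0 (\<lambda>k j. \<Sum>x\<in>S. G x k j) = Re (\<Sum>x\<in>S. \<Sum>x'\<in>S. minner m d (applyA m d A0 (G x)) (G x'))"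
    unfolding q0_def applyA_sum[OF S] minner_sum_left[OF S] minner_sum_right[OF S] ..
  also have "\<dots> = (\<Sum>x\<in>S. \<Sum>x'\<in>S. Re (minner m d (applyA m d A0 (G x)) (G x')))" by simp
  also have "\<dots> \<le> (\<Sum>x\<in>S. \<Sum>x'\<in>S. (q0 (G x) + q0 (G x')) / 2)"
  proof (intro sum_mono)
    fix x x'
    have "Re (minner m d (applyA m d A0 (G x)) (G x')) \<le> cmod (minner m d (applyA m d A0 (G x)) (G x'))"
      by (rule complex_Re_le_cmod)
    also have "\<dots> \<le> (1 * q0 (G x) + q0 (G x') / 1) / 2" by (rule amgm_b) simp
    finally show "Re (minner m d (applyA m d A0 (G x)) (G x')) \<le> (q0 (G x) + q0 (G x')) / 2" by simp
  qed
  also have "\<dots> = (\<Sum>x\<in>S. \<Sum>x'\<in>S. q0 (G x) / 2) + (\<Sum>x\<in>S. \<Sum>x'\<in>S. q0 (G x') / 2)"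
    by (simp add: add_divide_distrib sum.distrib)
  also have "(\<Sum>x\<in>S. \<Sum>x'\<in>S. q0 (G x') / 2) = (\<Sum>x\<in>S. \<Sum>x'\<in>S. q0 (G x) / 2)"
    by (rule sum.swap)
  also have "(\<Sum>x\<in>S. \<Sum>x'\<in>S. q0 (G x) / 2) + (\<Sum>x\<in>S. \<Sum>x'\<in>S. q0 (G x) / 2) = real (card S) * (\<Sum>x\<in>S. q0 (G x))"
    by (simp add: sum_distrib_left)
  finally show ?thesis .
qed

definition En :: "cfield \<Rightarrow> real" where
  "En f = (\<Sum>y\<in>T. q0 (grad n d f y))"

lemma En_formA: "Re (formA n d m A0 f f) = En f"
  by (simp add: Re_formA En_def q0_def)

lemma grad_proj_out:
  assumes x: "x \<in> T" and y: "y \<in> T" "y \<notin> Rbox x" and j: "j < d"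
  shows "grad n d (proj n d m l A x \<phi>) y k j = 0"
proof -
  have vH: "proj n d m l A x \<phi> \<in> H x" using proj_prop[OF x] by blast
  have "y \<notin> cube n d l x" using y cube_Rbox by blast
  moreover have "tadd n d y (unitv j) \<notin> cube n d l x" using outside_shift[OF y j x] .
  ultimately show ?thesis using vH by (simp add: grad_def Hcube_def)
qed

lemma local_est:
  assumes x: "x \<in> T"
  shows "En (proj n d m l A x \<phi>) \<le> 9 * (\<Sum>y\<in>Rbox x. q0 (grad n d \<phi> y))"
proof -
  define v where "v = proj n d m l A x \<phi>"
  have vH: "v \<in> H x" and vp: "\<forall>\<psi>\<in>H x. formA n d m A v \<psi> = formA n d m A \<phi> \<psi>"
    using proj_prop[OF x] unfolding v_def by blast+
  have RT: "Rbox x \<subseteq> T" by (rule Rbox_T)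
  have finR: "finite (Rbox x)" using RT finT finite_subset by blast
  have z: "minner m d P (grad n d v y) = 0" if "y \<in> T - Rbox x" for P y
    using grad_proj_out[OF x, of y] that unfolding v_def minner_def by simp
  have "En v / 2 = (\<Sum>y\<in>T. q0 (grad n d v y) / 2)" by (simp add: En_def sum_divide_distrib)
  also have "\<dots> \<le> Re (formA n d m A v v)"
    unfolding Re_formA by (intro sum_mono coercive_A)
  also have "\<dots> = Re (formA n d m A \<phi> v)" using vp vH by simp
  also have "\<dots> \<le> cmod (formA n d m A \<phi> v)" by (rule complex_Re_le_cmod)
  also have "formA n d m A \<phi> v = (\<Sum>y\<in>Rbox x. minner m d (applyA m d A (grad n d \<phi> y)) (grad n d v y))"
    unfolding formA_def by (rule sum.mono_neutral_right) (use RT finT z in auto)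
  also have "cmod \<dots> \<le> (\<Sum>y\<in>Rbox x. cmod (minner m d (applyA m d A (grad n d \<phi> y)) (grad n d v y)))"
    by (rule norm_sum)
  also have "\<dots> \<le> (\<Sum>y\<in>Rbox x. 9/4 * q0 (grad n d \<phi> y) + q0 (grad n d v y) / 4)"
    by (intro sum_mono bound_A)
  also have "\<dots> = 9/4 * (\<Sum>y\<in>Rbox x. q0 (grad n d \<phi> y)) + (\<Sum>y\<in>Rbox x. q0 (grad n d v y)) / 4"
    by (simp add: sum.distrib sum_distrib_left sum_divide_distrib)
  also have "(\<Sum>y\<in>Rbox x. q0 (grad n d v y)) \<le> En v"
    unfolding En_def using RT finT q0_nonneg by (intro sum_mono2) auto
  finally have "En v / 2 \<le> 9/4 * (\<Sum>y\<in>Rbox x. q0 (grad n d \<phi> y)) + En v / 4" by simp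
  then show ?thesis unfolding v_def by simp
qed

end



context setting begin

lemma global_est: "En (TA n d m l A \<phi>) \<le> 9 * En \<phi>"
proof -
  define v where "v x = proj n d m l A x \<phi>" for x
  define Lc :: complex where "Lc = of_nat l ^ d"
  define lr :: real where "lr = real (l ^ d)"
  have lr0: "lr > 0" using l2 by (simp add: lr_def)
  define S where "S y = {x \<in> T. y \<in> Rbox x}" for y
  have gT: "grad n d (TA n d m l A \<phi>) y = (\<lambda>k j. inverse Lc * (\<Sum>x\<in>T. grad n d (v x) y k j))" for y
  proof (intro ext)
    fix k j
    show "grad n d (TA n d m l A \<phi>) y k j = inverse Lc * (\<Sum>x\<in>T. grad n d (v x) y k j)"
      unfolding TA_def grad_def v_def Lc_def sum_subtractf by (simp add: divide_inverse_commute diff_divide_distrib right_diff_distrib)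
  qed
  have cL: "(cmod (inverse Lc))^2 = 1 / lr^2"
    by (simp add: Lc_def lr_def norm_inverse norm_power power2_eq_square divide_inverse)
  have pt: "q0 (grad n d (TA n d m l A \<phi>) y) \<le> (1 / lr) * (\<Sum>x\<in>T. q0 (grad n d (v x) y))" if y: "y \<in> T" for y
  proof -
    have ST: "S y \<subseteq> T" by (auto simp: S_def)
    have finS: "finite (S y)" using ST finT finite_subset by blast
    have "q0 (\<lambda>k j. \<Sum>x\<in>T. grad n d (v x) y k j) = q0 (\<lambda>k j. \<Sum>x\<in>S y. grad n d (v x) y k j)"
    proof (rule q0_cong)
      fix i j :: nat assume j: "j < d"
      show "(\<Sum>x\<in>T. grad n d (v x) y i j) = (\<Sum>x\<in>S y. grad n d (v x) y i j)"
        by (rule sum.mono_neutral_right[OF finT ST]) (use grad_proj_out y j in \<open>auto simp: S_def v_def\<close>)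
    qed
    also have "\<dots> \<le> real (card (S y)) * (\<Sum>x\<in>S y. q0 (grad n d (v x) y))"
      by (rule q0_sum[OF finS])
    also have "\<dots> \<le> lr * (\<Sum>x\<in>T. q0 (grad n d (v x) y))"
    proof (rule mult_mono)
      show "real (card (S y)) \<le> lr" using card_S[of y] unfolding lr_def S_def by linarith
      show "(\<Sum>x\<in>S y. q0 (grad n d (v x) y)) \<le> (\<Sum>x\<in>T. q0 (grad n d (v x) y))"
        by (rule sum_mono2[OF finT ST]) (simp add: q0_nonneg)
      show "0 \<le> lr" using lr0 by simp
      show "0 \<le> (\<Sum>x\<in>S y. q0 (grad n d (v x) y))" by (intro sum_nonneg q0_nonneg)
    qed
    finally have *: "q0 (\<lambda>k j. \<Sum>x\<in>T. grad n d (v x) y k j) \<le> lr * (\<Sum>x\<in>T. q0 (grad n d (v x) y))" .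
    have "q0 (grad n d (TA n d m l A \<phi>) y) = (1 / lr^2) * q0 (\<lambda>k j. \<Sum>x\<in>T. grad n d (v x) y k j)"
      unfolding gT q0_scale cL ..
    also have "\<dots> \<le> (1 / lr^2) * (lr * (\<Sum>x\<in>T. q0 (grad n d (v x) y)))"
      using * lr0 by (intro mult_left_mono) auto
    also have "\<dots> = (1 / lr) * (\<Sum>x\<in>T. q0 (grad n d (v x) y))"
      using lr0 by (simp add: power2_eq_square)
    finally show ?thesis .
  qed
  have "En (TA n d m l A \<phi>) \<le> (\<Sum>y\<in>T. (1 / lr) * (\<Sum>x\<in>T. q0 (grad n d (v x) y)))"
    unfolding En_def by (intro sum_mono pt)
  also have "\<dots> = (1 / lr) * (\<Sum>y\<in>T. \<Sum>x\<in>T. q0 (grad n d (v x) y))"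
    by (simp add: sum_distrib_left)
  also have "\<dots> = (1 / lr) * (\<Sum>x\<in>T. En (v x))"
    unfolding En_def by (subst sum.swap) (rule refl)
  also have "\<dots> \<le> (1 / lr) * (\<Sum>x\<in>T. 9 * (\<Sum>y\<in>Rbox x. q0 (grad n d \<phi> y)))"
    using lr0 local_est unfolding v_def by (intro mult_left_mono sum_mono) auto
  also have "\<dots> = (9 / lr) * (\<Sum>x\<in>T. \<Sum>y\<in>Rbox x. q0 (grad n d \<phi> y))"
    by (simp add: sum_distrib_left)
  also have "\<dots> \<le> (9 / lr) * (lr * En \<phi>)"
    using sum_Rbox_le[of "\<lambda>y. q0 (grad n d \<phi> y)"] q0_nonneg lr0 unfolding En_def lr_def
    by (intro mult_left_mono) auto
  also have "\<dots> = 9 * En \<phi>" using lr0 by simp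
  finally show ?thesis .
qed

end


theorem lemma5p4:
  fixes d m L N l :: nat and c0 :: real and A A0 A1 :: coeff and \<phi> :: cfield
  assumes "d \<ge> 2" and "m \<ge> 1" and "L \<ge> 3" and "odd L" and "N \<ge> 1"
    and "l \<ge> 3" and "l - 1 < L ^ N"
    and "c0 > 0"
    and "A = (\<lambda>i j k r. A0 i j k r + A1 i j k r)"
    and "\<forall>F G. minner m d (applyA m d A0 F) G = minner m d F (applyA m d A0 G)"
    and "\<forall>F. Re (minner m d (applyA m d A0 F) F) \<ge> c0 * (mnorm m d F)^2"
    and "\<forall>F. mnorm m d (applyA m d A1 F) \<le> (c0 / 2) * mnorm m d F"
    and "\<phi> \<in> XN (L ^ N) d m"
  shows "normA0 (L ^ N) d m A0 (TA (L ^ N) d m l A \<phi>) \<le> 9 * normA0 (L ^ N) d m A0 \<phi>"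
proof -
  interpret S: setting m d c0 A A0 A1 "L ^ N" l
    by unfold_locales (use assms in auto)
  have e: "S.En (TA (L ^ N) d m l A \<phi>) \<le> 9 * S.En \<phi>" by (rule S.global_est)
  have nn: "S.En \<phi> \<ge> 0" unfolding S.En_def by (intro sum_nonneg S.q0_nonneg)
  have "normA0 (L ^ N) d m A0 (TA (L ^ N) d m l A \<phi>) = sqrt (S.En (TA (L ^ N) d m l A \<phi>))"
    by (simp add: normA0_def S.En_formA)
  also have "\<dots> \<le> sqrt (9 * S.En \<phi>)" using e by simp
  also have "\<dots> = 3 * sqrt (S.En \<phi>)" by (simp add: real_sqrt_mult)
  also have "\<dots> \<le> 9 * sqrt (S.En \<phi>)" using nn by simp
  also have "sqrt (S.En \<phi>) = normA0 (L ^ N) d m A0 \<phi>"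
    by (simp add: normA0_def S.En_formA)
  finally show ?thesis .
qed

end
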